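(* Let $G$ be a group and $\mathcal{P}$ a poset, under inclusion, of subgroups of $G$ such that $1\in\mathcal{P}$ and the inclusions $\{U\hookrightarrow G\}_{U\in\mathcal{P}}$ form a colimit cone, i.e. $G\cong\operatorname{colim}_{U\in\mathcal{P}}U$. Let $H\colon\mathcal{P}\to\mathrm{Ab}$ be the functor with $H(U)=\{\sum_{g\in G}n_g g\in\mathbb{Z}[G]\mid \sum_{u\in U}n_{ug}=0\text{ for all }g\in G\}$ and sending inclusions of subgroups to inclusions. Let $U\in\mathcal{P}$ and suppose that for every finite subset $J\subset\mathcal{P}_{\le U}$, setting $M=\max J$, the subgroup $\langle V\mid V\in M\rangle$ is the free product of the subgroups $\{V\}_{V\in M}$ with amalgamated subgroup $\bigcap_{V\in M}V$, and $\bigcap_{V\in M}V\in\mathcal{P}$. Then $H$ is pseudo-projective at $U$.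
   Context: $\mathcal{P}_{\le U}=\{V\in\mathcal{P}:V\le U\}$; $\max J$ is the set of maximal elements of $J$. For $V\le W$ in $\mathcal{P}$, $H(V<W)$ is the inclusion $H(V)\subseteq H(W)$, and $\operatorname{Im}_H(V)=\sum_{W<V}\operatorname{Im}H(W<V)$. $H$ is pseudo-projective at $U$ if for every finite $J\subset\mathcal{P}_{\le U}$ and every $\oplus_{V\in J}x_V\in\bigoplus_{V\in J}H(V)$ with $\sum_{V\in J}H(V<U)(x_V)=0$, one has $x_V\in\operatorname{Im}_H(V)$ for all $V\in\max J$. *)

theory Defs
  imports "HOL-Algebra.Algebra"
begin

text \<open>Any colimit of a diagram of subgroups of G (and any amalgamated free product of
  subgroups of G) has elements representable as words over pairs (subgroup, element),
  so it suffices to test the universal property against groups whose carrier lies in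
  the type below.\<close>
type_synonym 'a test_group = "(('a set \<times> 'a) list) monoid"

definition colimit_cone :: "('a, 'm) monoid_scheme \<Rightarrow> 'a set set \<Rightarrow> bool" where
  "colimit_cone G P \<longleftrightarrow>
    (\<forall>(L :: 'a test_group) (f :: 'a set \<Rightarrow> 'a \<Rightarrow> ('a set \<times> 'a) list).
       group L \<and> (\<forall>U\<in>P. f U \<in> hom (G\<lparr>carrier := U\<rparr>) L) \<and>
       (\<forall>V\<in>P. \<forall>W\<in>P. V \<subseteq> W \<longrightarrow> (\<forall>v\<in>V. f W v = f V v)) \<longrightarrow>
       (\<exists>\<phi>\<in>hom G L. (\<forall>U\<in>P. \<forall>u\<in>U. \<phi> u = f U u) \<and>
          (\<forall>\<psi>\<in>hom G L. (\<forall>U\<in>P. \<forall>u\<in>U. \<psi> u = f U u) \<longrightarrow>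
              (\<forall>g\<in>carrier G. \<psi> g = \<phi> g))))"

definition amalgamated_free_product ::
  "('a, 'm) monoid_scheme \<Rightarrow> 'a set set \<Rightarrow> 'a set \<Rightarrow> bool" where
  "amalgamated_free_product G M A \<longleftrightarrow>
    (let K = generate G (\<Union>M) in
     \<forall>(L :: 'a test_group) (f :: 'a set \<Rightarrow> 'a \<Rightarrow> ('a set \<times> 'a) list).
       group L \<and> (\<forall>V\<in>M. f V \<in> hom (G\<lparr>carrier := V\<rparr>) L) \<and>
       (\<forall>V\<in>M. \<forall>W\<in>M. \<forall>a\<in>A. f V a = f W a) \<longrightarrow>
       (\<exists>\<phi>\<in>hom (G\<lparr>carrier := K\<rparr>) L. (\<forall>V\<in>M. \<forall>v\<in>V. \<phi> v = f V v) \<and>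
          (\<forall>\<psi>\<in>hom (G\<lparr>carrier := K\<rparr>) L. (\<forall>V\<in>M. \<forall>v\<in>V. \<psi> v = f V v) \<longrightarrow>
              (\<forall>x\<in>K. \<psi> x = \<phi> x))))"

definition group_ring_Z :: "('a, 'm) monoid_scheme \<Rightarrow> ('a \<Rightarrow> int) set" where
  "group_ring_Z G = {n. finite {g. n g \<noteq> 0} \<and> (\<forall>g. g \<notin> carrier G \<longrightarrow> n g = 0)}"

definition H_fun :: "('a, 'm) monoid_scheme \<Rightarrow> 'a set \<Rightarrow> ('a \<Rightarrow> int) set" where
  "H_fun G U = {n \<in> group_ring_Z G.
      \<forall>g\<in>carrier G. (\<Sum>u\<in>{u\<in>U. n (u \<otimes>\<^bsub>G\<^esub> g) \<noteq> 0}. n (u \<otimes>\<^bsub>G\<^esub> g)) = 0}"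

definition Im_H :: "('a, 'm) monoid_scheme \<Rightarrow> 'a set set \<Rightarrow> 'a set \<Rightarrow> ('a \<Rightarrow> int) set" where
  "Im_H G P V = {y. \<exists>F x. finite F \<and> F \<subseteq> {W\<in>P. W \<subset> V} \<and>
       (\<forall>W\<in>F. x W \<in> H_fun G W) \<and> y = (\<lambda>g. \<Sum>W\<in>F. x W g)}"

definition max_elems :: "'a set set \<Rightarrow> 'a set set" where
  "max_elems J = {V\<in>J. \<not> (\<exists>W\<in>J. V \<subset> W)}"

definition pseudo_projective_at :: "('a, 'm) monoid_scheme \<Rightarrow> 'a set set \<Rightarrow> 'a set \<Rightarrow> bool" where
  "pseudo_projective_at G P U \<longleftrightarrow>
    (\<forall>J x. finite J \<and> J \<subseteq> {V\<in>P. V \<subseteq> U} \<and> (\<forall>V\<in>J. x V \<in> H_fun G V) \<and>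
       (\<forall>g. (\<Sum>V\<in>J. x V g) = 0) \<longrightarrow>
       (\<forall>V\<in>max_elems J. x V \<in> Im_H G P V))"

end

theory Submission
  imports Defs
begin
locale amalg = group G for G (structure) +
  fixes M :: "'a set set" and A :: "'a set"
  assumes subM: "V \<in> M \<Longrightarrow> subgroup V G" and subA: "subgroup A G"
    and AV: "V \<in> M \<Longrightarrow> A \<subseteq> V"
begin

definition rep where "rep x = (if x \<in> A then \<one> else (SOME t. t \<in> A #> x))"
definition wfl :: "('a set \<times> 'a) list \<Rightarrow> bool" where
  "wfl ts = ((\<forall>p\<in>set ts. fst p \<in> M \<and> snd p \<in> fst p \<and> snd p \<notin> A \<and> rep (snd p) = snd p)
     \<and> successively (\<lambda>p q. fst p \<noteq> fst q) ts)"
definition Om :: "('a \<times> ('a set \<times> 'a) list) set" where "Om = {(a,ts). a \<in> A \<and> wfl ts}"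
definition hdV where "hdV V ts = (ts \<noteq> [] \<and> fst (hd ts) = V)"
definition dec where "dec V \<omega> = (if hdV V (snd \<omega>) then (fst \<omega> \<otimes> snd (hd (snd \<omega>)), tl (snd \<omega>)) else \<omega>)"
definition cmp where "cmp V p = (fst p \<otimes> inv (rep (fst p)),
   if fst p \<in> A then snd p else (V, rep (fst p)) # snd p)"
definition act where "act V v \<omega> = cmp V (v \<otimes> fst (dec V \<omega>), snd (dec V \<omega>))"
definition sig where "sig V v = (\<lambda>\<omega>\<in>Om. act V v \<omega>)"

lemma A_car: "x \<in> A \<Longrightarrow> x \<in> carrier G"
  by (rule subgroup.mem_carrier[OF subA])
lemma V_car: "V \<in> M \<Longrightarrow> x \<in> V \<Longrightarrow> x \<in> carrier G"
  by (rule subgroup.mem_carrier[OF subM])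

lemma A_mult: "a \<in> A \<Longrightarrow> b \<in> A \<Longrightarrow> a \<otimes> b \<in> A"
  by (rule subgroup.m_closed[OF subA])
lemma A_inv: "a \<in> A \<Longrightarrow> inv a \<in> A"
  by (rule subgroup.m_inv_closed[OF subA])
lemma A_one: "\<one> \<in> A"
  by (rule subgroup.one_closed[OF subA])
lemma V_mult: "V \<in> M \<Longrightarrow> a \<in> V \<Longrightarrow> b \<in> V \<Longrightarrow> a \<otimes> b \<in> V"
  by (rule subgroup.m_closed[OF subM])
lemma V_inv: "V \<in> M \<Longrightarrow> a \<in> V \<Longrightarrow> inv a \<in> V"
  by (rule subgroup.m_inv_closed[OF subM])
lemma V_one: "V \<in> M \<Longrightarrow> \<one> \<in> V"
  by (rule subgroup.one_closed[OF subM])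

lemma rep_ex: assumes "x \<in> carrier G" shows "\<exists>b\<in>A. rep x = b \<otimes> x"
proof (cases "x \<in> A")
  case True
  have "rep x = \<one>" using True by (simp add: rep_def)
  also have "\<one> = inv x \<otimes> x" using assms by simp
  finally show ?thesis using True A_inv by blast
next
  case False
  have "x \<in> A #> x" using rcos_self[OF assms subA] .
  then have "(SOME t. t \<in> A #> x) \<in> A #> x" by (rule someI)
  then have "rep x \<in> A #> x" unfolding rep_def using False by simp
  then obtain b where "b \<in> A" "rep x = b \<otimes> x" unfolding r_coset_def by blast
  then show ?thesis by blast
qed

lemma rep_car: "x \<in> carrier G \<Longrightarrow> rep x \<in> carrier G"
proof -
  assume x: "x \<in> carrier G"
  then obtain b where "b \<in> A" "rep x = b \<otimes> x" using rep_ex by blast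
  moreover have "b \<in> carrier G" using A_car \<open>b \<in> A\<close> by blast
  ultimately show ?thesis using x m_closed by presburger
qed

lemma rep_notA: assumes "x \<in> carrier G" "x \<notin> A" shows "rep x \<notin> A"
proof
  assume r: "rep x \<in> A"
  obtain b where b: "b \<in> A" "rep x = b \<otimes> x" using rep_ex assms by blast
  have "x = inv b \<otimes> rep x" using b assms A_car by (simp add: m_assoc[symmetric])
  moreover have "inv b \<otimes> rep x \<in> A" using b r by (simp add: A_mult A_inv)
  ultimately show False using assms by simp
qed

lemma rep_A_mult: assumes "b \<in> A" "x \<in> carrier G" shows "rep (b \<otimes> x) = rep x"
proof (cases "x \<in> A")
  case True
  then have "b \<otimes> x \<in> A" using assms A_mult by blast
  then show ?thesis using True by (simp add: rep_def)
next
  case False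
  have bx: "b \<otimes> x \<notin> A"
  proof
    assume "b \<otimes> x \<in> A"
    then have "inv b \<otimes> (b \<otimes> x) \<in> A" using assms by (simp add: A_mult A_inv)
    then show False using False assms A_car by (simp add: m_assoc[symmetric])
  qed
  have "A #> (b \<otimes> x) = A #> x"
  proof -
    have "b \<otimes> x \<in> A #> x" using rcosI[OF assms(1) _ assms(2)] subgroup.subset[OF subA] by simp
    then show ?thesis using repr_independence[OF _ assms(2) subA] by simp
  qed
  then show ?thesis using False bx by (simp add: rep_def)
qed

lemma rep_idem: assumes "x \<in> carrier G" shows "rep (rep x) = rep x"
proof -
  obtain b where b: "b \<in> A" "rep x = b \<otimes> x" using rep_ex assms by blast
  have e: "rep (b \<otimes> x) = rep x" using rep_A_mult[OF b(1) assms] .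
  have "rep (rep x) = rep (b \<otimes> x)" by (simp only: b(2))
  from trans[OF this e] show ?thesis .
qed

lemma rep_mem: "V \<in> M \<Longrightarrow> x \<in> V \<Longrightarrow> rep x \<in> V"
proof -
  assume a: "V \<in> M" "x \<in> V"
  then obtain b where "b \<in> A" "rep x = b \<otimes> x" using rep_ex V_car by blast
  moreover have "b \<in> V" using AV[OF a(1)] \<open>b \<in> A\<close> by blast
  ultimately show ?thesis using V_mult[OF a(1)] a(2) by simp
qed

lemma cmp_fstA: assumes "x \<in> carrier G" shows "x \<otimes> inv (rep x) \<in> A"
proof -
  obtain b where b: "b \<in> A" "rep x = b \<otimes> x" using rep_ex assms by blast
  have "x \<otimes> inv (b \<otimes> x) = inv b" using b assms A_car
    by (simp add: inv_mult_group m_assoc[symmetric])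
  then show ?thesis using b A_inv by simp
qed

lemma rep_one_A: "x \<in> A \<Longrightarrow> rep x = \<one>" by (simp add: rep_def)

lemma wfl_Cons: "wfl (p # ts) = (fst p \<in> M \<and> snd p \<in> fst p \<and> snd p \<notin> A \<and> rep (snd p) = snd p
   \<and> wfl ts \<and> \<not> hdV (fst p) ts)"
  unfolding wfl_def hdV_def by (auto simp: successively_Cons)

lemma dec_in: assumes "V \<in> M" "\<omega> \<in> Om"
  shows "fst (dec V \<omega>) \<in> V \<and> wfl (snd (dec V \<omega>)) \<and> \<not> hdV V (snd (dec V \<omega>))"
proof -
  obtain a ts where w: "\<omega> = (a, ts)" "a \<in> A" "wfl ts" using assms(2) by (auto simp: Om_def)
  show ?thesis
  proof (cases "hdV V ts")
    case True
    then obtain t rest where ts: "ts = (V,t) # rest" unfolding hdV_def by (cases ts) auto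
    then show ?thesis using w assms AV[OF assms(1)] subM[OF assms(1)]
      by (auto simp: dec_def wfl_Cons hdV_def V_mult)
  next
    case False
    then show ?thesis using w AV[OF assms(1)] by (auto simp: dec_def)
  qed
qed

lemma cmp_in: assumes "V \<in> M" "x \<in> V" "wfl rest" "\<not> hdV V rest"
  shows "cmp V (x, rest) \<in> Om"
proof -
  have xc: "x \<in> carrier G" using V_car assms by blast
  show ?thesis
    using cmp_fstA[OF xc] rep_notA[OF xc] rep_idem[OF xc] rep_mem[OF assms(1,2)] assms
    by (auto simp: cmp_def Om_def wfl_Cons)
qed

lemma cmp_dec: assumes "V \<in> M" "\<omega> \<in> Om" shows "cmp V (dec V \<omega>) = \<omega>"
proof -
  obtain a ts where w: "\<omega> = (a, ts)" "a \<in> A" "wfl ts" using assms(2) by (auto simp: Om_def)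
  have ac: "a \<in> carrier G" using A_car w by blast
  show ?thesis
  proof (cases "hdV V ts")
    case True
    then obtain t rest where ts: "ts = (V,t) # rest" unfolding hdV_def by (cases ts) auto
    have t: "t \<in> V" "t \<notin> A" "rep t = t" using w ts by (auto simp: wfl_Cons)
    have tc: "t \<in> carrier G" using V_car assms t by blast
    have r: "rep (a \<otimes> t) = t" using rep_A_mult[OF w(2) tc] t by simp
    have nA: "a \<otimes> t \<notin> A"
    proof
      assume "a \<otimes> t \<in> A"
      then have "inv a \<otimes> (a \<otimes> t) \<in> A" using w by (simp add: A_mult A_inv)
      then show False using t ac tc by (simp add: m_assoc[symmetric])
    qed
    show ?thesis using True ts w r nA ac tc by (simp add: dec_def cmp_def m_assoc)
  next
    case False
    then show ?thesis using w by (simp add: dec_def cmp_def rep_one_A A_car V_car)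
  qed
qed

lemma dec_cmp: assumes "V \<in> M" "x \<in> V" "wfl rest" "\<not> hdV V rest"
  shows "dec V (cmp V (x, rest)) = (x, rest)"
proof -
  have xc: "x \<in> carrier G" using V_car assms by blast
  show ?thesis
  proof (cases "x \<in> A")
    case True
    then show ?thesis using assms by (simp add: dec_def cmp_def rep_one_A A_car V_car)
  next
    case False
    then show ?thesis using assms xc rep_car[OF xc]
      by (simp add: dec_def cmp_def hdV_def m_assoc)
  qed
qed

lemma act_in: assumes "V \<in> M" "v \<in> V" "\<omega> \<in> Om" shows "act V v \<omega> \<in> Om"
  using dec_in[OF assms(1,3)] assms subM[OF assms(1)]
  by (auto simp: act_def intro!: cmp_in V_mult)

lemma act_mult: assumes "V \<in> M" "v \<in> V" "w \<in> V" "\<omega> \<in> Om"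
  shows "act V v (act V w \<omega>) = act V (v \<otimes> w) \<omega>"
proof -
  have d: "fst (dec V \<omega>) \<in> V" "wfl (snd (dec V \<omega>))" "\<not> hdV V (snd (dec V \<omega>))"
    using dec_in[OF assms(1,4)] by auto
  have wx: "w \<otimes> fst (dec V \<omega>) \<in> V" using d assms V_mult by blast
  show ?thesis unfolding act_def
    using dec_cmp[OF assms(1) wx d(2,3)] assms d V_car by (simp add: m_assoc)
qed

lemma act_one: assumes "V \<in> M" "\<omega> \<in> Om" shows "act V \<one> \<omega> = \<omega>"
  using dec_in[OF assms] cmp_dec[OF assms] V_car[OF assms(1)] by (simp add: act_def)

lemma act_A: assumes "V \<in> M" "u \<in> A" "(b, ts) \<in> Om" shows "act V u (b, ts) = (u \<otimes> b, ts)"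
proof -
  have "act V u (b, ts) = act V u (act V b (\<one>, ts))"
  proof -
    have o: "(\<one>, ts) \<in> Om" using assms A_one by (auto simp: Om_def)
    have "act V b (\<one>, ts) = (b, ts)"
    proof (cases "hdV V ts")
      case True
      then obtain t rest where ts: "ts = (V,t) # rest" unfolding hdV_def by (cases ts) auto
      have t: "t \<in> V" "t \<notin> A" "rep t = t" using assms ts by (auto simp: Om_def wfl_Cons)
      have tc: "t \<in> carrier G" using V_car assms t by blast
      have bc: "b \<in> carrier G" using assms A_car by (auto simp: Om_def)
      have r: "rep (b \<otimes> t) = t" using rep_A_mult[OF _ tc] t assms by (auto simp: Om_def)
      have nA: "b \<otimes> t \<notin> A"
      proof
        assume "b \<otimes> t \<in> A"
        then have "inv b \<otimes> (b \<otimes> t) \<in> A" using assms subA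
          by (auto simp: Om_def A_mult A_inv)
        then show False using t bc tc by (simp add: m_assoc[symmetric])
      qed
      show ?thesis using True ts r nA bc tc by (simp add: act_def dec_def cmp_def m_assoc)
    next
      case False
      then show ?thesis using assms by (auto simp: act_def dec_def cmp_def rep_one_A Om_def A_car)
    qed
    then show ?thesis by simp
  qed
  also have "\<dots> = act V (u \<otimes> b) (\<one>, ts)"
    using act_mult[OF assms(1), of u b "(\<one>, ts)"] assms AV subA
    by (auto simp: Om_def A_one)
  also have "\<dots> = (u \<otimes> b, ts)"
  proof -
    have ub: "u \<otimes> b \<in> A" using assms by (auto simp: Om_def A_mult)
    have "(u \<otimes> b, ts) \<in> Om" using assms ub by (auto simp: Om_def)
    show ?thesis
    proof (cases "hdV V ts")
      case True
      then obtain t rest where ts: "ts = (V,t) # rest" unfolding hdV_def by (cases ts) auto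
      have t: "t \<in> V" "t \<notin> A" "rep t = t" using assms ts by (auto simp: Om_def wfl_Cons)
      have tc: "t \<in> carrier G" using V_car assms t by blast
      have bc: "u \<otimes> b \<in> carrier G" using ub A_car by auto
      have r: "rep ((u \<otimes> b) \<otimes> t) = t" using rep_A_mult[OF ub tc] t by auto
      have nA: "(u \<otimes> b) \<otimes> t \<notin> A"
      proof
        assume "(u \<otimes> b) \<otimes> t \<in> A"
        then have "inv (u \<otimes> b) \<otimes> ((u \<otimes> b) \<otimes> t) \<in> A" using ub subA
          by (auto simp: A_mult A_inv)
        then show False using t bc tc by (simp add: m_assoc[symmetric])
      qed
      show ?thesis using True ts r nA bc tc by (simp add: act_def dec_def cmp_def m_assoc)
    next
      case False
      then show ?thesis using ub by (auto simp: act_def dec_def cmp_def rep_one_A A_car)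
    qed
  qed
  finally show ?thesis .
qed

lemma act_grow: assumes "V \<in> M" "v \<in> V" "v \<notin> A" "(b, ts) \<in> Om" "\<not> hdV V ts"
  shows "\<exists>a t. act V v (b, ts) = (a, (V, t) # ts)"
proof -
  have bA: "b \<in> A" using assms by (auto simp: Om_def)
  have vc: "v \<in> carrier G" using V_car assms by blast
  have "v \<otimes> b \<notin> A"
  proof
    assume "v \<otimes> b \<in> A"
    then have "(v \<otimes> b) \<otimes> inv b \<in> A" using bA subA by (auto simp: A_mult A_inv)
    then show False using assms vc bA A_car by (simp add: m_assoc)
  qed
  then show ?thesis using assms by (simp add: act_def dec_def cmp_def)
qed


end

lemma transport_group:
  fixes B :: "('b, 'z) monoid_scheme" and e :: "'c \<Rightarrow> 'b" and i :: "'b \<Rightarrow> 'c"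
  assumes gB: "group B" and sS: "subgroup S B" and ei: "\<And>x. x \<in> S \<Longrightarrow> e (i x) = x"
  shows "group \<lparr>carrier = i ` S, monoid.mult = (\<lambda>p q. i (e p \<otimes>\<^bsub>B\<^esub> e q)), one = i \<one>\<^bsub>B\<^esub>\<rparr>"
proof -
  interpret B: group B by (rule gB)
  have Sc: "\<And>x. x \<in> S \<Longrightarrow> x \<in> carrier B" using subgroup.mem_carrier[OF sS] .
  have Sm: "\<And>x y. x \<in> S \<Longrightarrow> y \<in> S \<Longrightarrow> x \<otimes>\<^bsub>B\<^esub> y \<in> S" using subgroup.m_closed[OF sS] .
  have Si: "\<And>x. x \<in> S \<Longrightarrow> inv\<^bsub>B\<^esub> x \<in> S" using subgroup.m_inv_closed[OF sS] .
  have S1: "\<one>\<^bsub>B\<^esub> \<in> S" using subgroup.one_closed[OF sS] .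
  show ?thesis
  proof (rule groupI, goal_cases)
    case (1 x y)
    then show ?case using ei Sm by auto
  next
    case 2
    then show ?case using S1 by auto
  next
    case (3 x y z)
    then obtain a b c where abc: "a \<in> S" "b \<in> S" "c \<in> S" "x = i a" "y = i b" "z = i c" by auto
    then show ?case using ei Sm Sc by (simp add: B.m_assoc)
  next
    case (4 x)
    then obtain a where "a \<in> S" "x = i a" by auto
    then show ?case using ei S1 Sc by simp
  next
    case (5 x)
    then obtain a where a: "a \<in> S" "x = i a" by auto
    show ?case
    proof (intro bexI[of _ "i (inv\<^bsub>B\<^esub> a)"])
      show "i (inv\<^bsub>B\<^esub> a) \<in> carrier \<lparr>carrier = i ` S, monoid.mult = (\<lambda>p q. i (e p \<otimes>\<^bsub>B\<^esub> e q)), one = i \<one>\<^bsub>B\<^esub>\<rparr>"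
        using Si a by auto
      show "i (inv\<^bsub>B\<^esub> a) \<otimes>\<^bsub>\<lparr>carrier = i ` S, monoid.mult = (\<lambda>p q. i (e p \<otimes>\<^bsub>B\<^esub> e q)), one = i \<one>\<^bsub>B\<^esub>\<rparr>\<^esub> x =
        \<one>\<^bsub>\<lparr>carrier = i ` S, monoid.mult = (\<lambda>p q. i (e p \<otimes>\<^bsub>B\<^esub> e q)), one = i \<one>\<^bsub>B\<^esub>\<rparr>\<^esub>"
        using a ei Si Sc by simp
    qed
  qed
qed

context amalg
begin

lemma B_carrier: "carrier (BijGroup Om) = Bij Om" by (simp add: BijGroup_def)
lemma B_one: "\<one>\<^bsub>BijGroup Om\<^esub> \<in> carrier (BijGroup Om)"
  by (rule monoid.one_closed[OF group.is_monoid[OF group_BijGroup]])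
lemma B_m: "x \<in> carrier (BijGroup Om) \<Longrightarrow> y \<in> carrier (BijGroup Om) \<Longrightarrow> x \<otimes>\<^bsub>BijGroup Om\<^esub> y \<in> carrier (BijGroup Om)"
  by (rule monoid.m_closed[OF group.is_monoid[OF group_BijGroup]])
lemma B_assoc: "x \<in> carrier (BijGroup Om) \<Longrightarrow> y \<in> carrier (BijGroup Om) \<Longrightarrow> z \<in> carrier (BijGroup Om) \<Longrightarrow>
   (x \<otimes>\<^bsub>BijGroup Om\<^esub> y) \<otimes>\<^bsub>BijGroup Om\<^esub> z = x \<otimes>\<^bsub>BijGroup Om\<^esub> (y \<otimes>\<^bsub>BijGroup Om\<^esub> z)"
  by (rule monoid.m_assoc[OF group.is_monoid[OF group_BijGroup]])
lemma B_l_one: "x \<in> carrier (BijGroup Om) \<Longrightarrow> \<one>\<^bsub>BijGroup Om\<^esub> \<otimes>\<^bsub>BijGroup Om\<^esub> x = x"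
  by (rule monoid.l_one[OF group.is_monoid[OF group_BijGroup]])
lemma B_r_one: "x \<in> carrier (BijGroup Om) \<Longrightarrow> x \<otimes>\<^bsub>BijGroup Om\<^esub> \<one>\<^bsub>BijGroup Om\<^esub> = x"
  by (rule monoid.r_one[OF group.is_monoid[OF group_BijGroup]])

lemma sig_Bij: assumes "V \<in> M" "v \<in> V" shows "sig V v \<in> Bij Om"
proof -
  have iv: "inv v \<in> V" using V_inv[OF assms] .
  have vc: "v \<in> carrier G" using V_car[OF assms] .
  have "bij_betw (act V v) Om Om"
  proof (rule bij_betw_byWitness[where f' = "act V (inv v)"])
    show "\<forall>a\<in>Om. act V (inv v) (act V v a) = a"
      using act_mult[OF assms(1) iv assms(2)] act_one[OF assms(1)] vc by simp
    show "\<forall>a\<in>Om. act V v (act V (inv v) a) = a"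
      using act_mult[OF assms(1) assms(2) iv] act_one[OF assms(1)] vc by simp
    show "act V v ` Om \<subseteq> Om" using act_in[OF assms] by blast
    show "act V (inv v) ` Om \<subseteq> Om" using act_in[OF assms(1) iv] by blast
  qed
  then have "bij_betw (sig V v) Om Om" unfolding sig_def
    by (rule bij_betw_cong[THEN iffD1, rotated]) simp
  then show ?thesis unfolding Bij_def sig_def by auto
qed

lemma sig_mult: assumes "V \<in> M" "v \<in> V" "w \<in> V"
  shows "sig V (v \<otimes> w) = sig V v \<otimes>\<^bsub>BijGroup Om\<^esub> sig V w"
proof -
  have "sig V v \<otimes>\<^bsub>BijGroup Om\<^esub> sig V w = compose Om (sig V v) (sig V w)"
    using sig_Bij[OF assms(1,2)] sig_Bij[OF assms(1,3)] by (simp add: BijGroup_def)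
  also have "\<dots> = sig V (v \<otimes> w)"
    unfolding compose_def sig_def using act_mult[OF assms] act_in[OF assms(1,3)]
    by (auto intro!: restrict_ext)
  finally show ?thesis by simp
qed

lemma sig_one: assumes "V \<in> M" shows "sig V \<one> = \<one>\<^bsub>BijGroup Om\<^esub>"
  unfolding sig_def BijGroup_def using act_one[OF assms] by (auto intro!: restrict_ext)

lemma sig_inv: assumes "V \<in> M" "v \<in> V" shows "inv\<^bsub>BijGroup Om\<^esub> (sig V v) = sig V (inv v)"
proof -
  interpret B: group "BijGroup Om" by (rule group_BijGroup)
  have iv: "inv v \<in> V" using V_inv[OF assms] .
  have "sig V (inv v) \<otimes>\<^bsub>BijGroup Om\<^esub> sig V v = \<one>\<^bsub>BijGroup Om\<^esub>"
    using sig_mult[OF assms(1) iv assms(2)] sig_one[OF assms(1)] V_car[OF assms] by simp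
  then show ?thesis
    using B.inv_equality sig_Bij[OF assms] sig_Bij[OF assms(1) iv] by (simp add: BijGroup_def)
qed

lemma sig_A: assumes "V \<in> M" "W \<in> M" "u \<in> A" shows "sig V u = sig W u"
  unfolding sig_def
proof (rule restrict_ext)
  fix \<omega> assume "\<omega> \<in> Om"
  then obtain b ts where "\<omega> = (b, ts)" "(b, ts) \<in> Om" by (cases \<omega>) auto
  then show "act V u \<omega> = act W u \<omega>" using act_A assms by simp
qed

definition ev :: "('a set \<times> 'a) list \<Rightarrow> ('a \<times> ('a set \<times> 'a) list \<Rightarrow> 'a \<times> ('a set \<times> 'a) list)" where
  "ev w = foldr (\<lambda>p acc. sig (fst p) (snd p) \<otimes>\<^bsub>BijGroup Om\<^esub> acc) w \<one>\<^bsub>BijGroup Om\<^esub>"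

definition okw where "okw w = (\<forall>p\<in>set w. fst p \<in> M \<and> snd p \<in> fst p)"

lemma ev_carrier: "okw w \<Longrightarrow> ev w \<in> carrier (BijGroup Om)"
proof (induction w)
  case Nil
  then show ?case using B_one by (simp add: ev_def)
next
  case (Cons p w)
  have ok: "okw w" "fst p \<in> M" "snd p \<in> fst p" using Cons.prems by (auto simp: okw_def)
  have "ev (p # w) = sig (fst p) (snd p) \<otimes>\<^bsub>BijGroup Om\<^esub> ev w" by (simp add: ev_def)
  then show ?case using B_m sig_Bij[OF ok(2,3)] Cons.IH[OF ok(1)] B_carrier by simp
qed

lemma ev_append: "okw w1 \<Longrightarrow> okw w2 \<Longrightarrow> ev (w1 @ w2) = ev w1 \<otimes>\<^bsub>BijGroup Om\<^esub> ev w2"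
proof (induction w1)
  case Nil
  have "ev ([] @ w2) = \<one>\<^bsub>BijGroup Om\<^esub> \<otimes>\<^bsub>BijGroup Om\<^esub> ev w2"
    using B_l_one[OF ev_carrier[OF Nil(2)]] by simp
  then show ?case by (simp add: ev_def)
next
  case (Cons p w)
  have ok: "okw w" "fst p \<in> M" "snd p \<in> fst p" using Cons.prems by (auto simp: okw_def)
  have "ev ((p # w) @ w2) = sig (fst p) (snd p) \<otimes>\<^bsub>BijGroup Om\<^esub> ev (w @ w2)" by (simp add: ev_def)
  also have "\<dots> = sig (fst p) (snd p) \<otimes>\<^bsub>BijGroup Om\<^esub> (ev w \<otimes>\<^bsub>BijGroup Om\<^esub> ev w2)"
    using Cons ok by simp
  also have "\<dots> = (sig (fst p) (snd p) \<otimes>\<^bsub>BijGroup Om\<^esub> ev w) \<otimes>\<^bsub>BijGroup Om\<^esub> ev w2"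
    using B_assoc[symmetric] sig_Bij[OF ok(2,3)] ev_carrier[OF ok(1)]
      ev_carrier[OF Cons.prems(2)] B_carrier by simp
  also have "\<dots> = ev (p # w) \<otimes>\<^bsub>BijGroup Om\<^esub> ev w2" by (simp add: ev_def)
  finally show ?case .
qed

definition gens where "gens = (\<Union>V\<in>M. sig V ` V)"
definition SS where "SS = generate (BijGroup Om) gens"

lemma gens_sub: "gens \<subseteq> carrier (BijGroup Om)"
  unfolding gens_def using sig_Bij by (auto simp: BijGroup_def)

lemma SS_sub: "subgroup SS (BijGroup Om)"
  unfolding SS_def using group.generate_is_subgroup[OF group_BijGroup gens_sub] .

lemma SS_word: "\<pi> \<in> SS \<Longrightarrow> \<exists>w. okw w \<and> ev w = \<pi>"
  unfolding SS_def
proof (induction rule: generate.induct)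
  case one
  then show ?case by (intro exI[of _ "[]"]) (simp add: okw_def ev_def)
next
  case (incl h)
  then obtain V v where Vv: "V \<in> M" "v \<in> V" "h = sig V v" by (auto simp: gens_def)
  have "ev [(V, v)] = sig V v" using B_r_one sig_Bij[OF Vv(1,2)] B_carrier by (simp add: ev_def)
  then show ?case using Vv by (intro exI[of _ "[(V, v)]"]) (auto simp: okw_def)
next
  case (inv h)
  then obtain V v where Vv: "V \<in> M" "v \<in> V" "h = sig V v" by (auto simp: gens_def)
  have iv: "inv v \<in> V" using V_inv[OF Vv(1,2)] .
  have "ev [(V, inv v)] = sig V (inv v)" using B_r_one sig_Bij[OF Vv(1) iv] B_carrier by (simp add: ev_def)
  then show ?case using Vv iv sig_inv[OF Vv(1,2)] by (intro exI[of _ "[(V, inv v)]"]) (auto simp: okw_def)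
next
  case (eng h1 h2)
  then obtain w1 w2 where "okw w1" "ev w1 = h1" "okw w2" "ev w2 = h2" by blast
  then show ?case using ev_append by (intro exI[of _ "w1 @ w2"]) (auto simp: okw_def)
qed

definition iota where "iota \<pi> = (SOME w. okw w \<and> ev w = \<pi>)"

lemma ev_iota: "\<pi> \<in> SS \<Longrightarrow> ev (iota \<pi>) = \<pi>"
  unfolding iota_def by (rule someI_ex[where P="\<lambda>w. okw w \<and> ev w = \<pi>", THEN conjunct2]) (rule SS_word)

definition LL :: "('a set \<times> 'a) list monoid" where
  "LL = \<lparr>carrier = iota ` SS, monoid.mult = (\<lambda>p q. iota (ev p \<otimes>\<^bsub>BijGroup Om\<^esub> ev q)), one = iota \<one>\<^bsub>BijGroup Om\<^esub>\<rparr>"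

lemma LL_group: "group LL"
  unfolding LL_def using transport_group[OF group_BijGroup SS_sub ev_iota] .

lemma sig_SS: "V \<in> M \<Longrightarrow> v \<in> V \<Longrightarrow> sig V v \<in> SS"
  unfolding SS_def gens_def by (auto intro: generate.incl)

lemma exists_psi:
  assumes afp: "amalgamated_free_product G M A"
  shows "\<exists>\<psi>. (\<forall>k\<in>generate G (\<Union>M). \<psi> k \<in> Bij Om) \<and>
     (\<forall>k1\<in>generate G (\<Union>M). \<forall>k2\<in>generate G (\<Union>M). \<psi> (k1 \<otimes> k2) = compose Om (\<psi> k1) (\<psi> k2)) \<and>
     (\<forall>V\<in>M. \<forall>v\<in>V. \<psi> v = sig V v)"
proof -
  define K where "K = generate G (\<Union>M)"
  define f where "f = (\<lambda>V v. iota (sig V v))"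
  have fh: "\<forall>V\<in>M. f V \<in> hom (G\<lparr>carrier := V\<rparr>) LL"
  proof
    fix V assume V: "V \<in> M"
    show "f V \<in> hom (G\<lparr>carrier := V\<rparr>) LL"
      unfolding hom_def
    proof (intro CollectI conjI ballI)
      show "f V \<in> carrier (G\<lparr>carrier := V\<rparr>) \<rightarrow> carrier LL"
        using sig_SS V by (auto simp: f_def LL_def)
      fix x y assume "x \<in> carrier (G\<lparr>carrier := V\<rparr>)" "y \<in> carrier (G\<lparr>carrier := V\<rparr>)"
      then have xy: "x \<in> V" "y \<in> V" by auto
      show "f V (x \<otimes>\<^bsub>G\<lparr>carrier := V\<rparr>\<^esub> y) = f V x \<otimes>\<^bsub>LL\<^esub> f V y"
        using sig_mult[OF V xy] ev_iota sig_SS[OF V] xy by (simp add: f_def LL_def)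
    qed
  qed
  have fA: "\<forall>V\<in>M. \<forall>W\<in>M. \<forall>a\<in>A. f V a = f W a"
  proof (intro ballI)
    fix V W a assume "V \<in> M" "W \<in> M" "a \<in> A"
    then have "sig V a = sig W a" by (rule sig_A)
    then show "f V a = f W a" unfolding f_def by simp
  qed
  note imp = afp[unfolded amalgamated_free_product_def Let_def, THEN spec[where x=LL], THEN spec[where x=f]]
  have "\<exists>\<phi>\<in>hom (G\<lparr>carrier := K\<rparr>) LL. (\<forall>V\<in>M. \<forall>v\<in>V. \<phi> v = f V v)"
  proof -
    have "group LL \<and> (\<forall>V\<in>M. f V \<in> hom (G\<lparr>carrier := V\<rparr>) LL) \<and> (\<forall>V\<in>M. \<forall>W\<in>M. \<forall>a\<in>A. f V a = f W a)"
      by (intro conjI LL_group fh fA)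
    from mp[OF imp this] obtain \<phi> where "\<phi> \<in> hom (G\<lparr>carrier := K\<rparr>) LL" "\<forall>V\<in>M. \<forall>v\<in>V. \<phi> v = f V v"
      unfolding K_def by (elim bexE conjE) simp
    then show ?thesis by (intro bexI)
  qed
  then obtain \<phi> where \<phi>: "\<phi> \<in> hom (G\<lparr>carrier := K\<rparr>) LL" "\<forall>V\<in>M. \<forall>v\<in>V. \<phi> v = f V v"
    by (elim bexE)
  define \<psi> where "\<psi> = (\<lambda>k. ev (\<phi> k))"
  have psiS: "\<And>k. k \<in> K \<Longrightarrow> \<psi> k \<in> SS"
  proof -
    fix k assume "k \<in> K"
    then have "\<phi> k \<in> carrier LL" using \<phi>(1) unfolding hom_def by (auto simp del: Pi_iff intro: funcset_mem)
    then have "\<phi> k \<in> iota ` SS" by (simp add: LL_def)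
    then show "\<psi> k \<in> SS" using ev_iota by (auto simp: \<psi>_def)
  qed
  have SSB: "\<And>x. x \<in> SS \<Longrightarrow> x \<in> Bij Om"
    using subgroup.mem_carrier[OF SS_sub] by (simp add: BijGroup_def)
  show ?thesis
  proof (intro exI[of _ \<psi>] conjI ballI)
    fix k assume "k \<in> generate G (\<Union>M)"
    then show "\<psi> k \<in> Bij Om" using psiS SSB unfolding K_def by simp
  next
    fix k1 k2 assume k: "k1 \<in> generate G (\<Union>M)" "k2 \<in> generate G (\<Union>M)"
    have "\<phi> (k1 \<otimes> k2) = \<phi> k1 \<otimes>\<^bsub>LL\<^esub> \<phi> k2"
      using hom_mult[OF \<phi>(1)] k unfolding K_def by simp
    then have "\<psi> (k1 \<otimes> k2) = \<psi> k1 \<otimes>\<^bsub>BijGroup Om\<^esub> \<psi> k2"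
      using ev_iota subgroup.m_closed[OF SS_sub] psiS k by (simp add: \<psi>_def LL_def K_def)
    then show "\<psi> (k1 \<otimes> k2) = compose Om (\<psi> k1) (\<psi> k2)"
      using SSB psiS k by (simp add: BijGroup_def K_def)
  next
    fix V v assume "V \<in> M" "v \<in> V"
    then show "\<psi> v = sig V v" using \<phi>(2) ev_iota sig_SS by (simp add: \<psi>_def f_def)
  qed
qed


end

definition cs :: "('a \<Rightarrow> int) \<Rightarrow> 'a set \<Rightarrow> int" where
  "cs n S = (\<Sum>x\<in>{x\<in>S. n x \<noteq> 0}. n x)"

lemma cs_eq: assumes "finite F" "{x. n x \<noteq> 0} \<subseteq> F" shows "cs n S = sum n (S \<inter> F)"
  unfolding cs_def
proof (rule sum.mono_neutral_left)
  show "finite (S \<inter> F)" using assms by simp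
  show "{x \<in> S. n x \<noteq> 0} \<subseteq> S \<inter> F" using assms by auto
  show "\<forall>i\<in>S \<inter> F - {x \<in> S. n x \<noteq> 0}. n i = 0" by auto
qed

lemma cs_sum: assumes "finite I" "\<And>i. i \<in> I \<Longrightarrow> finite {x. n i x \<noteq> 0}"
  shows "cs (\<lambda>x. \<Sum>i\<in>I. n i x) S = (\<Sum>i\<in>I. cs (n i) S)"
proof -
  define F where "F = (\<Union>i\<in>I. {x. n i x \<noteq> 0})"
  have fF: "finite F" using assms by (simp add: F_def)
  have s1: "{x. (\<Sum>i\<in>I. n i x) \<noteq> 0} \<subseteq> F"
  proof
    fix x assume "x \<in> {x. (\<Sum>i\<in>I. n i x) \<noteq> 0}"
    then have "(\<Sum>i\<in>I. n i x) \<noteq> 0" by simp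
    then obtain i where "i \<in> I" "n i x \<noteq> 0" using sum.neutral by force
    then show "x \<in> F" by (auto simp: F_def)
  qed
  have "cs (\<lambda>x. \<Sum>i\<in>I. n i x) S = (\<Sum>x\<in>S \<inter> F. \<Sum>i\<in>I. n i x)" using cs_eq[OF fF s1] .
  also have "\<dots> = (\<Sum>i\<in>I. \<Sum>x\<in>S \<inter> F. n i x)" by (rule sum.swap)
  also have "\<dots> = (\<Sum>i\<in>I. cs (n i) S)"
  proof (rule sum.cong[OF refl])
    fix i assume "i \<in> I"
    then have "{x. n i x \<noteq> 0} \<subseteq> F" by (auto simp: F_def)
    then show "(\<Sum>x\<in>S \<inter> F. n i x) = cs (n i) S" using cs_eq[OF fF] by simp
  qed
  finally show ?thesis .
qed

lemma cs_split: assumes "finite {x. n x \<noteq> 0}"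
  shows "cs n S = cs n (S \<inter> T) + cs n (S - T)"
proof -
  have "cs n S = sum n (S \<inter> {x. n x \<noteq> 0})" using cs_eq[OF assms subset_refl] by simp
  also have "\<dots> = sum n ((S \<inter> {x. n x \<noteq> 0}) \<inter> T) + sum n ((S \<inter> {x. n x \<noteq> 0}) - T)"
    using assms by (simp add: sum.Int_Diff)
  also have "\<dots> = cs n (S \<inter> T) + cs n (S - T)"
  proof -
    have "cs n (S \<inter> T) = sum n ((S \<inter> T) \<inter> {x. n x \<noteq> 0})" using cs_eq[OF assms subset_refl, where S="S \<inter> T"] .
    moreover have "cs n (S - T) = sum n ((S - T) \<inter> {x. n x \<noteq> 0})" using cs_eq[OF assms subset_refl, where S="S - T"] .
    moreover have "(S \<inter> T) \<inter> {x. n x \<noteq> 0} = (S \<inter> {x. n x \<noteq> 0}) \<inter> T" by blast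
    moreover have "(S - T) \<inter> {x. n x \<noteq> 0} = (S \<inter> {x. n x \<noteq> 0}) - T" by blast
    ultimately show ?thesis by simp
  qed
  finally show ?thesis .
qed

lemma cs_partition:
  assumes fin: "finite {x. n x \<noteq> 0}"
    and C: "\<And>b. b \<in> B \<Longrightarrow> C b \<subseteq> B \<and> b \<in> C b \<and> cs n (C b) = 0"
    and P: "\<And>b b'. b \<in> B \<Longrightarrow> b' \<in> C b \<Longrightarrow> C b' = C b"
  shows "cs n B = 0"
proof -
  define S where "S = {x\<in>B. n x \<noteq> 0}"
  have fS: "finite S" using fin by (rule rev_finite_subset) (auto simp: S_def)
  define Cls where "Cls = (\<lambda>b. S \<inter> C b) ` S"
  have US: "\<Union>Cls = S"
  proof
    show "\<Union>Cls \<subseteq> S" by (auto simp: Cls_def)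
    show "S \<subseteq> \<Union>Cls"
    proof
      fix x assume x: "x \<in> S"
      then have "x \<in> B" by (simp add: S_def)
      then have "x \<in> S \<inter> C x" using C x by blast
      then show "x \<in> \<Union>Cls" using x by (auto simp: Cls_def)
    qed
  qed
  have "cs n B = sum n S" by (simp add: cs_def S_def)
  also have "\<dots> = sum n (\<Union>Cls)" using US by simp
  also have "\<dots> = sum (sum n) Cls"
  proof -
    have fin1: "\<forall>Q1\<in>Cls. finite Q1" using fS by (auto simp: Cls_def)
    have disj: "\<forall>Q1\<in>Cls. \<forall>Q2\<in>Cls. Q1 \<noteq> Q2 \<longrightarrow> Q1 \<inter> Q2 = {}"
    proof (intro ballI impI)
      fix Q1 Q2 assume Q1: "Q1 \<in> Cls" and Q2: "Q2 \<in> Cls" and ne: "Q1 \<noteq> Q2"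
      obtain b1 where b1: "b1 \<in> S" "Q1 = S \<inter> C b1" using Q1 by (auto simp: Cls_def)
      obtain b2 where b2: "b2 \<in> S" "Q2 = S \<inter> C b2" using Q2 by (auto simp: Cls_def)
      show "Q1 \<inter> Q2 = {}"
      proof (rule ccontr)
        assume "Q1 \<inter> Q2 \<noteq> {}"
        then obtain x where x: "x \<in> C b1" "x \<in> C b2" using b1 b2 by auto
        have "C x = C b1" using P[OF _ x(1)] b1 by (auto simp: S_def)
        moreover have "C x = C b2" using P[OF _ x(2)] b2 by (auto simp: S_def)
        ultimately show False using ne b1 b2 by simp
      qed
    qed
    show ?thesis using sum.Union_disjoint[OF fin1 disj, of n] by simp
  qed
  also have "\<dots> = 0"
  proof (rule sum.neutral, rule ballI)
    fix Q1 assume "Q1 \<in> Cls"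
    then obtain b where b: "b \<in> S" "Q1 = S \<inter> C b" by (auto simp: Cls_def)
    have bB: "b \<in> B" using b by (simp add: S_def)
    have "Q1 = {x \<in> C b. n x \<noteq> 0}" using b C[OF bB] by (auto simp: S_def)
    then show "sum n Q1 = 0" using C[OF bB] by (simp add: cs_def)
  qed
  finally show ?thesis .
qed

lemma (in group) Hsum_cs: assumes "U \<subseteq> carrier G" "g \<in> carrier G"
  shows "(\<Sum>u\<in>{u\<in>U. n (u \<otimes> g) \<noteq> 0}. n (u \<otimes> g)) = cs n (U #> g)"
proof -
  have inj: "inj_on (\<lambda>u. u \<otimes> g) {u\<in>U. n (u \<otimes> g) \<noteq> 0}"
    using assms by (auto intro!: inj_onI simp: subsetD)
  have img: "(\<lambda>u. u \<otimes> g) ` {u\<in>U. n (u \<otimes> g) \<noteq> 0} = {x \<in> U #> g. n x \<noteq> 0}"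
    by (auto simp: r_coset_def)
  show ?thesis unfolding cs_def using sum.reindex[OF inj, of n] img by (simp add: comp_def)
qed

lemma (in group) H_fun_cs: assumes "U \<subseteq> carrier G"
  shows "n \<in> H_fun G U \<longleftrightarrow> n \<in> group_ring_Z G \<and> (\<forall>g\<in>carrier G. cs n (U #> g) = 0)"
  unfolding H_fun_def using Hsum_cs[OF assms] by auto

context amalg
begin

lemma core:
  assumes finM: "finite M" and neM: "M \<noteq> {}"
    and afp: "amalgamated_free_product G M A"
    and yH: "\<forall>V\<in>M. y V \<in> H_fun G V"
    and ysum: "\<forall>g. (\<Sum>V\<in>M. y V g) = 0"
  shows "\<forall>V\<in>M. y V \<in> H_fun G A"
proof -
  define K where "K = generate G (\<Union>M)"
  have MK: "\<Union>M \<subseteq> carrier G" using V_car by blast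
  have Ksub: "subgroup K G" unfolding K_def by (rule generate_is_subgroup[OF MK])
  have VK: "\<And>V v. V \<in> M \<Longrightarrow> v \<in> V \<Longrightarrow> v \<in> K" unfolding K_def by (auto intro: generate.incl)
  obtain \<psi> where psi1: "\<And>k. k \<in> K \<Longrightarrow> \<psi> k \<in> Bij Om"
    and psi2: "\<And>k1 k2. k1 \<in> K \<Longrightarrow> k2 \<in> K \<Longrightarrow> \<psi> (k1 \<otimes> k2) = compose Om (\<psi> k1) (\<psi> k2)"
    and psi3: "\<And>V v. V \<in> M \<Longrightarrow> v \<in> V \<Longrightarrow> \<psi> v = sig V v"
    using exists_psi[OF afp] unfolding K_def by blast
  define cc where "cc = (\<lambda>g. SOME c. c \<in> K #> g)"
  define kk where "kk = (\<lambda>g. g \<otimes> inv (cc g))"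
  have cc_in: "\<And>g. g \<in> carrier G \<Longrightarrow> cc g \<in> K #> g"
  proof -
    fix g assume g: "g \<in> carrier G"
    have "g \<in> K #> g" by (rule rcos_self[OF g Ksub])
    then show "cc g \<in> K #> g" unfolding cc_def by (rule someI)
  qed
  have kk_in: "\<And>g. g \<in> carrier G \<Longrightarrow> kk g \<in> K"
  proof -
    fix g assume g: "g \<in> carrier G"
    obtain k where k: "k \<in> K" "cc g = k \<otimes> g" using cc_in[OF g] unfolding r_coset_def by blast
    have kc: "k \<in> carrier G" using subgroup.mem_carrier[OF Ksub k(1)] .
    have "kk g = g \<otimes> (inv g \<otimes> inv k)" using k g kc by (simp add: kk_def inv_mult_group)
    also have "\<dots> = inv k" using g kc by (simp add: m_assoc[symmetric])
    finally show "kk g \<in> K" using subgroup.m_inv_closed[OF Ksub k(1)] by simp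
  qed
  have kk_mult: "\<And>v g. v \<in> K \<Longrightarrow> g \<in> carrier G \<Longrightarrow> kk (v \<otimes> g) = v \<otimes> kk g"
  proof -
    fix v g assume v: "v \<in> K" and g: "g \<in> carrier G"
    have vc: "v \<in> carrier G" using subgroup.mem_carrier[OF Ksub v] .
    have "v \<otimes> g \<in> K #> g" using rcosI[OF v subgroup.subset[OF Ksub] g] .
    then have "K #> g = K #> (v \<otimes> g)" by (rule repr_independence[OF _ g Ksub])
    then have "cc (v \<otimes> g) = cc g" unfolding cc_def by simp
    moreover have "cc g \<in> carrier G"
      using cc_in[OF g] r_coset_subset_G[OF subgroup.subset[OF Ksub] g] by blast
    ultimately show "kk (v \<otimes> g) = v \<otimes> kk g" using vc g by (simp add: kk_def m_assoc)
  qed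
  define om0 where "om0 = (\<one>, [] :: ('a set \<times> 'a) list)"
  have om0: "om0 \<in> Om" by (simp add: om0_def Om_def wfl_def A_one)
  define \<tau> where "\<tau> = (\<lambda>g. \<psi> (kk g) om0)"
  have tau_in: "\<And>g. g \<in> carrier G \<Longrightarrow> \<tau> g \<in> Om"
    unfolding \<tau>_def using psi1 kk_in om0 Bij_imp_funcset by (metis funcset_mem)
  have tau_mult: "\<And>V v g. V \<in> M \<Longrightarrow> v \<in> V \<Longrightarrow> g \<in> carrier G \<Longrightarrow> \<tau> (v \<otimes> g) = act V v (\<tau> g)"
  proof -
    fix V v g assume V: "V \<in> M" and v: "v \<in> V" and g: "g \<in> carrier G"
    have "\<tau> (v \<otimes> g) = \<psi> (v \<otimes> kk g) om0" unfolding \<tau>_def using kk_mult[OF VK[OF V v] g] by simp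
    also have "\<dots> = compose Om (\<psi> v) (\<psi> (kk g)) om0" using psi2[OF VK[OF V v] kk_in[OF g]] by simp
    also have "\<dots> = \<psi> v (\<tau> g)" using om0 by (simp add: compose_def \<tau>_def)
    also have "\<dots> = act V v (\<tau> g)" using psi3[OF V v] tau_in[OF g] by (simp add: sig_def)
    finally show "\<tau> (v \<otimes> g) = act V v (\<tau> g)" .
  qed
  define D where "D = (\<lambda>g. snd (\<tau> g))"
  obtain V0 where V0: "V0 \<in> M" using neM by blast
  have D_A: "\<And>u g. u \<in> A \<Longrightarrow> g \<in> carrier G \<Longrightarrow> D (u \<otimes> g) = D g"
  proof -
    fix u g assume u: "u \<in> A" and g: "g \<in> carrier G"
    obtain b ts where bt: "\<tau> g = (b, ts)" by (cases "\<tau> g")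
    have "\<tau> (u \<otimes> g) = act V0 u (b, ts)" using tau_mult[OF V0 _ g, of u] u AV[OF V0] bt by auto
    also have "\<dots> = (u \<otimes> b, ts)" using act_A[OF V0 u] tau_in[OF g] bt by simp
    finally show "D (u \<otimes> g) = D g" using bt by (simp add: D_def)
  qed
  have D_grow: "\<And>V v g. V \<in> M \<Longrightarrow> v \<in> V \<Longrightarrow> v \<notin> A \<Longrightarrow> g \<in> carrier G \<Longrightarrow> \<not> hdV V (D g) \<Longrightarrow>
      \<exists>t. D (v \<otimes> g) = (V, t) # D g"
  proof -
    fix V v g assume V: "V \<in> M" and v: "v \<in> V" "v \<notin> A" and g: "g \<in> carrier G" and h: "\<not> hdV V (D g)"
    obtain b ts where bt: "\<tau> g = (b, ts)" by (cases "\<tau> g")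
    obtain a t where "act V v (b, ts) = (a, (V, t) # ts)"
      using act_grow[OF V v, of b ts] tau_in[OF g] bt h by (auto simp: D_def)
    then show "\<exists>t. D (v \<otimes> g) = (V, t) # D g" using tau_mult[OF V v(1) g] bt by (simp add: D_def)
  qed
  define z where "z = (\<lambda>V g. cs (y V) (A #> g))"
  define dep where "dep = (\<lambda>V g. 2 * length (D g) + (if hdV V (D g) then 0 else 1::nat))"
  have yfin: "\<And>V. V \<in> M \<Longrightarrow> finite {x. y V x \<noteq> 0}"
    using yH by (auto simp: H_fun_def group_ring_Z_def)
  have zA: "\<And>V u g. u \<in> A \<Longrightarrow> g \<in> carrier G \<Longrightarrow> dep V (u \<otimes> g) = dep V g"
    using D_A by (simp add: dep_def)
  define Dset where "Dset = {d. \<exists>V g. V \<in> M \<and> g \<in> carrier G \<and> z V g \<noteq> 0 \<and> d = dep V g}"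
  have Dfin: "finite Dset"
  proof -
    have "Dset \<subseteq> (\<lambda>(V, s). dep V s) ` (M \<times> (\<Union>V\<in>M. {x. y V x \<noteq> 0}))"
    proof
      fix d assume "d \<in> Dset"
      then obtain V g where Vg: "V \<in> M" "g \<in> carrier G" "z V g \<noteq> 0" "d = dep V g"
        by (auto simp: Dset_def)
      have "{x \<in> A #> g. y V x \<noteq> 0} \<noteq> {}"
      proof
        assume "{x \<in> A #> g. y V x \<noteq> 0} = {}"
        then have "z V g = 0" by (simp add: z_def cs_def)
        then show False using Vg by simp
      qed
      then obtain s where s: "s \<in> A #> g" "y V s \<noteq> 0" by blast
      then obtain u where u: "u \<in> A" "s = u \<otimes> g" unfolding r_coset_def by blast
      have "dep V s = d" using zA[OF u(1) Vg(2), of V] u Vg by simp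
      then show "d \<in> (\<lambda>(V, s). dep V s) ` (M \<times> (\<Union>V\<in>M. {x. y V x \<noteq> 0}))"
        using Vg s by (auto intro!: image_eqI[of _ _ "(V, s)"])
    qed
    moreover have "finite (M \<times> (\<Union>V\<in>M. {x. y V x \<noteq> 0}))" using finM yfin by auto
    ultimately show ?thesis by (meson finite_imageI finite_subset)
  qed
  have Dmax: "\<And>V g. V \<in> M \<Longrightarrow> g \<in> carrier G \<Longrightarrow> z V g \<noteq> 0 \<Longrightarrow> dep V g \<le> Max Dset"
  proof -
    fix V g assume "V \<in> M" "g \<in> carrier G" "z V g \<noteq> 0"
    then have "dep V g \<in> Dset" by (auto simp: Dset_def)
    then show "dep V g \<le> Max Dset" using Dfin by simp
  qed
  have zsum: "\<And>g. (\<Sum>V\<in>M. z V g) = 0"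
  proof -
    fix g
    have "(\<Sum>V\<in>M. z V g) = cs (\<lambda>x. \<Sum>V\<in>M. y V x) (A #> g)"
      unfolding z_def using cs_sum[OF finM yfin] by simp
    also have "\<dots> = 0" using ysum by (simp add: cs_def)
    finally show "(\<Sum>V\<in>M. z V g) = 0" .
  qed
  have allz: "\<forall>V\<in>M. \<forall>g\<in>carrier G. z V g = 0"
  proof (rule ccontr)
    assume "\<not> ?thesis"
    then obtain V1 g1 where "V1 \<in> M" "g1 \<in> carrier G" "z V1 g1 \<noteq> 0" by blast
    then have "Dset \<noteq> {}" by (auto simp: Dset_def)
    then have "Max Dset \<in> Dset" using Dfin by simp
    then obtain V g where Vg: "V \<in> M" "g \<in> carrier G" "z V g \<noteq> 0" "dep V g = Max Dset"
      by (auto simp: Dset_def)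
    show False
    proof (cases "hdV V (D g)")
      case True
      have others: "\<And>W. W \<in> M - {V} \<Longrightarrow> z W g = 0"
      proof (rule ccontr)
        fix W assume W: "W \<in> M - {V}" and nz: "z W g \<noteq> 0"
        have "\<not> hdV W (D g)" using True W by (auto simp: hdV_def)
        then have "dep W g > dep V g" using True by (simp add: dep_def)
        moreover have "dep W g \<le> Max Dset" using Dmax[OF _ Vg(2) nz] W by simp
        ultimately show False using Vg by simp
      qed
      have "(\<Sum>V\<in>M. z V g) = z V g + (\<Sum>W\<in>M - {V}. z W g)"
        using sum.remove[OF finM Vg(1)] by simp
      also have "\<dots> = z V g" using others by simp
      finally show False using zsum Vg by simp
    next
      case False
      have AVg: "A #> g \<subseteq> V #> g" using AV[OF Vg(1)] by (auto simp: r_coset_def)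
      have c0: "cs (y V) (V #> g) = 0"
        using yH Vg H_fun_cs[of V] subgroup.subset[OF subM[OF Vg(1)]] by auto
      have rest: "cs (y V) ((V #> g) - (A #> g)) = 0"
      proof (rule cs_partition[OF yfin[OF Vg(1)], where C="\<lambda>b. A #> b"])
        fix b assume b: "b \<in> (V #> g) - (A #> g)"
        then obtain v where v: "v \<in> V" "b = v \<otimes> g" unfolding r_coset_def by blast
        have vc: "v \<in> carrier G" using V_car[OF Vg(1) v(1)] .
        have bc: "b \<in> carrier G" using v vc Vg(2) by simp
        have vA: "v \<notin> A"
        proof
          assume "v \<in> A"
          then have "b \<in> A #> g" using v rcosI[OF _ subgroup.subset[OF subA] Vg(2)] by simp
          then show False using b by simp
        qed
        have sub: "A #> b \<subseteq> (V #> g) - (A #> g)"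
        proof
          fix x assume "x \<in> A #> b"
          then obtain u where u: "u \<in> A" "x = u \<otimes> b" unfolding r_coset_def by blast
          have uc: "u \<in> carrier G" using A_car[OF u(1)] .
          have x: "x = (u \<otimes> v) \<otimes> g" using u v uc vc Vg(2) by (simp add: m_assoc)
          have uvV: "u \<otimes> v \<in> V" using V_mult[OF Vg(1) _ v(1)] AV[OF Vg(1)] u(1) by blast
          have "x \<in> V #> g" using x rcosI[OF uvV subgroup.subset[OF subM[OF Vg(1)]] Vg(2)] by simp
          moreover have "x \<notin> A #> g"
          proof
            assume "x \<in> A #> g"
            then obtain a where a: "a \<in> A" "x = a \<otimes> g" unfolding r_coset_def by blast
            have ac: "a \<in> carrier G" using A_car[OF a(1)] .
            have "(u \<otimes> v) \<otimes> g = a \<otimes> g" using x a by simp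
            then have "u \<otimes> v = a" using uc vc ac Vg(2) by (simp add: r_cancel)
            then have "inv u \<otimes> (u \<otimes> v) = inv u \<otimes> a" by simp
            then have "v = inv u \<otimes> a" using uc vc ac by (simp add: m_assoc[symmetric])
            then have "v \<in> A" using A_mult[OF A_inv[OF u(1)] a(1)] by simp
            then show False using vA by simp
          qed
          ultimately show "x \<in> (V #> g) - (A #> g)" by simp
        qed
        have selfb: "b \<in> A #> b" by (rule rcos_self[OF bc subA])
        obtain t where Dt: "D b = (V, t) # D g" using D_grow[OF Vg(1) v(1) vA Vg(2) False] v by blast
        have "dep V b = 2 * length (D g) + 2" using Dt by (simp add: dep_def hdV_def)
        moreover have "dep V g = 2 * length (D g) + 1" using False by (simp add: dep_def)
        ultimately have "dep V b > Max Dset" using Vg by simp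
        then have "z V b = 0" using Dmax[OF Vg(1) bc] by force
        then show "A #> b \<subseteq> (V #> g) - (A #> g) \<and> b \<in> A #> b \<and> cs (y V) (A #> b) = 0"
          using sub selfb by (simp add: z_def)
      next
        fix b b' assume b: "b \<in> (V #> g) - (A #> g)" and b': "b' \<in> A #> b"
        have bc: "b \<in> carrier G" using b r_coset_subset_G[OF subgroup.subset[OF subM[OF Vg(1)]] Vg(2)] by blast
        show "A #> b' = A #> b" using repr_independence[OF b' bc subA] by simp
      qed
      have "cs (y V) (V #> g) = cs (y V) ((V #> g) \<inter> (A #> g)) + cs (y V) ((V #> g) - (A #> g))"
        by (rule cs_split[OF yfin[OF Vg(1)]])
      also have "(V #> g) \<inter> (A #> g) = A #> g" using AVg by blast
      finally have "z V g = 0" using c0 rest by (simp add: z_def)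
      then show False using Vg by simp
    qed
  qed
  show ?thesis
  proof
    fix V assume V: "V \<in> M"
    have "y V \<in> group_ring_Z G" using yH V by (simp add: H_fun_def)
    then show "y V \<in> H_fun G A"
      using H_fun_cs[OF subgroup.subset[OF subA]] allz V by (simp add: z_def)
  qed
qed

end

lemma cs_add: assumes "finite {x. a x \<noteq> 0}" "finite {x. b x \<noteq> 0}"
  shows "cs (\<lambda>x. a x + b x) S = cs a S + cs b S"
proof -
  define F where "F = {x. a x \<noteq> 0} \<union> {x. b x \<noteq> 0}"
  have fF: "finite F" using assms by (simp add: F_def)
  have "cs (\<lambda>x. a x + b x) S = (\<Sum>x\<in>S \<inter> F. a x + b x)" by (rule cs_eq[OF fF]) (auto simp: F_def)
  also have "\<dots> = sum a (S \<inter> F) + sum b (S \<inter> F)" by (simp add: sum.distrib)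
  also have "\<dots> = cs a S + cs b S" using cs_eq[OF fF, of a S] cs_eq[OF fF, of b S] by (auto simp: F_def)
  finally show ?thesis .
qed

lemma cs_neg: "cs (\<lambda>x. - a x) S = - cs a S"
  by (simp add: cs_def sum_negf)

lemma grZ_add: "a \<in> group_ring_Z G \<Longrightarrow> b \<in> group_ring_Z G \<Longrightarrow> (\<lambda>x. a x + b x) \<in> group_ring_Z G"
proof -
  assume a: "a \<in> group_ring_Z G" and b: "b \<in> group_ring_Z G"
  have "{x. a x + b x \<noteq> 0} \<subseteq> {x. a x \<noteq> 0} \<union> {x. b x \<noteq> 0}" by auto
  then show ?thesis using a b unfolding group_ring_Z_def by (auto intro: finite_subset)
qed

lemma grZ_neg: "a \<in> group_ring_Z G \<Longrightarrow> (\<lambda>x. - a x) \<in> group_ring_Z G"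
  unfolding group_ring_Z_def by simp

lemma grZ_zero: "(\<lambda>x. 0) \<in> group_ring_Z G"
  unfolding group_ring_Z_def by simp

context group
begin

lemma H_zero: "U \<subseteq> carrier G \<Longrightarrow> (\<lambda>x. 0) \<in> H_fun G U"
  using H_fun_cs grZ_zero by (simp add: cs_def)

lemma H_add: assumes "U \<subseteq> carrier G" "a \<in> H_fun G U" "b \<in> H_fun G U"
  shows "(\<lambda>x. a x + b x) \<in> H_fun G U"
proof -
  have ga: "a \<in> group_ring_Z G" and gb: "b \<in> group_ring_Z G" using assms by (auto simp: H_fun_def)
  have fa: "finite {x. a x \<noteq> 0}" and fb: "finite {x. b x \<noteq> 0}" using ga gb by (auto simp: group_ring_Z_def)
  show ?thesis using assms H_fun_cs[OF assms(1)] cs_add[OF fa fb] grZ_add[OF ga gb] by simp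
qed

lemma H_neg: assumes "U \<subseteq> carrier G" "a \<in> H_fun G U"
  shows "(\<lambda>x. - a x) \<in> H_fun G U"
proof -
  have ga: "a \<in> group_ring_Z G" using assms by (auto simp: H_fun_def)
  show ?thesis using assms H_fun_cs[OF assms(1)] grZ_neg[OF ga] by (simp add: cs_neg)
qed

lemma H_sum: assumes "U \<subseteq> carrier G" "finite I" "\<And>i. i \<in> I \<Longrightarrow> x i \<in> H_fun G U"
  shows "(\<lambda>g. \<Sum>i\<in>I. x i g) \<in> H_fun G U"
  using assms(2,3)
proof (induction I rule: finite_induct)
  case empty
  then show ?case using H_zero[OF assms(1)] by simp
next
  case (insert i I)
  have "(\<lambda>g. x i g + (\<Sum>i\<in>I. x i g)) \<in> H_fun G U"
    using H_add[OF assms(1)] insert by simp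
  then show ?case using insert by simp
qed

lemma H_mono: assumes W: "subgroup W G" and V: "subgroup V G" and WV: "W \<subseteq> V"
  shows "H_fun G W \<subseteq> H_fun G V"
proof
  fix n assume n: "n \<in> H_fun G W"
  have Wc: "W \<subseteq> carrier G" and Vc: "V \<subseteq> carrier G" using W V subgroup.subset by auto
  have gn: "n \<in> group_ring_Z G" and cw: "\<forall>g\<in>carrier G. cs n (W #> g) = 0"
    using n H_fun_cs[OF Wc] by auto
  have fn: "finite {x. n x \<noteq> 0}" using gn by (simp add: group_ring_Z_def)
  have "\<forall>g\<in>carrier G. cs n (V #> g) = 0"
  proof
    fix g assume g: "g \<in> carrier G"
    show "cs n (V #> g) = 0"
    proof (rule cs_partition[OF fn, where C="\<lambda>b. W #> b"])
      fix b assume b: "b \<in> V #> g"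
      then obtain v where v: "v \<in> V" "b = v \<otimes> g" unfolding r_coset_def by blast
      have vc: "v \<in> carrier G" using Vc v by blast
      have bc: "b \<in> carrier G" using v vc g by simp
      have "W #> b \<subseteq> V #> g"
      proof
        fix x assume "x \<in> W #> b"
        then obtain w where w: "w \<in> W" "x = w \<otimes> b" unfolding r_coset_def by blast
        have wc: "w \<in> carrier G" using Wc w by blast
        have "x = (w \<otimes> v) \<otimes> g" using w v wc vc g by (simp add: m_assoc)
        moreover have "w \<otimes> v \<in> V" using subgroup.m_closed[OF V _ v(1), of w] WV w by blast
        ultimately show "x \<in> V #> g" using rcosI[OF _ Vc g] by simp
      qed
      moreover have "b \<in> W #> b" by (rule rcos_self[OF bc W])
      moreover have "cs n (W #> b) = 0" using cw bc by simp
      ultimately show "W #> b \<subseteq> V #> g \<and> b \<in> W #> b \<and> cs n (W #> b) = 0" by simp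
    next
      fix b b' assume b: "b \<in> V #> g" and b': "b' \<in> W #> b"
      have bc: "b \<in> carrier G" using b r_coset_subset_G[OF Vc g] by blast
      show "W #> b' = W #> b" using repr_independence[OF b' bc W] by simp
    qed
  qed
  then show "n \<in> H_fun G V" using H_fun_cs[OF Vc] gn by simp
qed

end

lemma max_above: assumes "finite J" "W \<in> J" shows "\<exists>V\<in>max_elems J. W \<subseteq> V"
proof -
  have "finite {V\<in>J. W \<subseteq> V}" "{V\<in>J. W \<subseteq> V} \<noteq> {}" using assms by auto
  from finite_has_maximal[OF this] obtain m where m: "m \<in> J" "W \<subseteq> m"
    and mx: "\<forall>b\<in>{V\<in>J. W \<subseteq> V}. m \<subseteq> b \<longrightarrow> m = b" by auto
  have "m \<in> max_elems J"
    unfolding max_elems_def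
  proof (intro CollectI conjI notI m(1))
    assume "\<exists>W'\<in>J. m \<subset> W'"
    then obtain W' where "W' \<in> J" "m \<subset> W'" by blast
    then show False using mx m(2) by blast
  qed
  then show ?thesis using m by blast
qed

theorem proposition4p1:
  fixes G :: "('a, 'm) monoid_scheme" and P :: "'a set set" and U :: "'a set"
  assumes "group G"
    and "\<forall>V\<in>P. subgroup V G"
    and "{\<one>\<^bsub>G\<^esub>} \<in> P"
    and "colimit_cone G P"
    and "U \<in> P"
    and "\<forall>J. finite J \<and> J \<noteq> {} \<and> J \<subseteq> {V\<in>P. V \<subseteq> U} \<longrightarrow>
           amalgamated_free_product G (max_elems J) (\<Inter>(max_elems J)) \<and>
           \<Inter>(max_elems J) \<in> P"
  shows "pseudo_projective_at G P U"
  unfolding pseudo_projective_at_def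
proof (intro allI impI ballI)
  interpret group G by (rule assms(1))
  fix J x V0
  assume hyp: "finite J \<and> J \<subseteq> {V \<in> P. V \<subseteq> U} \<and> (\<forall>V\<in>J. x V \<in> H_fun G V) \<and> (\<forall>g. (\<Sum>V\<in>J. x V g) = 0)"
    and V0: "V0 \<in> max_elems J"
  have finJ: "finite J" and JP: "J \<subseteq> {V \<in> P. V \<subseteq> U}" and xH: "\<forall>V\<in>J. x V \<in> H_fun G V"
    and xs: "\<forall>g. (\<Sum>V\<in>J. x V g) = 0" using hyp by auto
  define Mx where "Mx = max_elems J"
  have MxJ: "Mx \<subseteq> J" by (auto simp: Mx_def max_elems_def)
  have V0J: "V0 \<in> J" using V0 MxJ Mx_def by blast
  have finMx: "finite Mx" using finJ MxJ finite_subset by blast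
  have subP: "\<And>V. V \<in> J \<Longrightarrow> subgroup V G"
  proof -
    fix V assume "V \<in> J"
    then have "V \<in> P" using JP by blast
    then show "subgroup V G" using assms(2) by simp
  qed
  have carP: "\<And>V. V \<in> J \<Longrightarrow> V \<subseteq> carrier G" by (rule subgroup.subset[OF subP])
  define \<sigma> where "\<sigma> = (\<lambda>W. if W \<in> Mx then W else (SOME V. V \<in> Mx \<and> W \<subseteq> V))"
  have sig1: "\<And>W. W \<in> J \<Longrightarrow> \<sigma> W \<in> Mx \<and> W \<subseteq> \<sigma> W"
  proof -
    fix W assume W: "W \<in> J"
    show "\<sigma> W \<in> Mx \<and> W \<subseteq> \<sigma> W"
    proof (cases "W \<in> Mx")
      case True then show ?thesis by (simp add: \<sigma>_def)
    next
      case False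
      have "\<exists>V. V \<in> Mx \<and> W \<subseteq> V" using max_above[OF finJ W] by (auto simp: Mx_def)
      then have "(SOME V. V \<in> Mx \<and> W \<subseteq> V) \<in> Mx \<and> W \<subseteq> (SOME V. V \<in> Mx \<and> W \<subseteq> V)"
        by (rule someI_ex)
      then show ?thesis using False unfolding \<sigma>_def by simp
    qed
  qed
  define y where "y = (\<lambda>V g. \<Sum>W\<in>{W\<in>J. \<sigma> W = V}. x W g)"
  have yH: "\<forall>V\<in>Mx. y V \<in> H_fun G V"
  proof
    fix V assume V: "V \<in> Mx"
    have VJ: "V \<in> J" using V MxJ by blast
    show "y V \<in> H_fun G V" unfolding y_def
    proof (rule H_sum[OF carP[OF VJ]])
      show "finite {W \<in> J. \<sigma> W = V}" using finJ by simp
      fix W assume W: "W \<in> {W \<in> J. \<sigma> W = V}"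
      then have "W \<subseteq> V" "W \<in> J" using sig1 by auto
      then show "x W \<in> H_fun G V" using H_mono[OF subP[of W] subP[OF VJ]] xH by blast
    qed
  qed
  have ysum: "\<forall>g. (\<Sum>V\<in>Mx. y V g) = 0"
  proof
    fix g
    have "(\<Sum>V\<in>Mx. y V g) = (\<Sum>W\<in>J. x W g)"
      unfolding y_def using sum.group[OF finJ finMx, of \<sigma> "\<lambda>W. x W g"] sig1 by fastforce
    then show "(\<Sum>V\<in>Mx. y V g) = 0" using xs by simp
  qed
  have V0Mx: "V0 \<in> Mx" using V0 by (simp add: Mx_def)
  have sV0: "\<sigma> V0 = V0" using V0Mx by (simp add: \<sigma>_def)
  define R where "R = {W\<in>J. \<sigma> W = V0} - {V0}"
  have finR: "finite R" using finJ by (simp add: R_def)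
  have Rsub: "\<And>W. W \<in> R \<Longrightarrow> W \<in> P \<and> W \<subset> V0"
  proof -
    fix W assume W: "W \<in> R"
    then have "W \<in> J" "W \<subseteq> V0" "W \<noteq> V0" using sig1 by (auto simp: R_def)
    then show "W \<in> P \<and> W \<subset> V0" using JP by auto
  qed
  have RH: "\<And>W. W \<in> R \<Longrightarrow> (\<lambda>g. - x W g) \<in> H_fun G W"
  proof -
    fix W assume W: "W \<in> R"
    then have "W \<in> J" by (simp add: R_def)
    then show "(\<lambda>g. - x W g) \<in> H_fun G W" using H_neg[OF carP] xH by blast
  qed
  have xdec: "\<And>g. x V0 g = y V0 g + (\<Sum>W\<in>R. - x W g)"
  proof -
    fix g
    have e: "{W\<in>J. \<sigma> W = V0} = insert V0 R" using V0J sV0 by (auto simp: R_def)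
    have nR: "V0 \<notin> R" by (simp add: R_def)
    have "y V0 g = (\<Sum>W\<in>insert V0 R. x W g)" unfolding y_def e ..
    also have "\<dots> = x V0 g + (\<Sum>W\<in>R. x W g)" using finR nR by simp
    finally have "y V0 g = x V0 g + (\<Sum>W\<in>R. x W g)" .
    then show "x V0 g = y V0 g + (\<Sum>W\<in>R. - x W g)" by (simp add: sum_negf)
  qed
  show "x V0 \<in> Im_H G P V0"
  proof (cases "Mx = {V0}")
    case True
    have "y V0 = (\<lambda>g. 0)" using ysum True by auto
    then have "x V0 = (\<lambda>g. \<Sum>W\<in>R. - x W g)" using xdec by auto
    then show ?thesis unfolding Im_H_def
      using finR Rsub RH by (intro CollectI exI[of _ R] exI[of _ "\<lambda>W g. - x W g"]) auto
  next
    case False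
    then obtain V1 where V1: "V1 \<in> Mx" "V1 \<noteq> V0" using V0Mx by blast
    define A where "A = \<Inter>Mx"
    have Jne: "J \<noteq> {}" using V0J by blast
    have hA: "amalgamated_free_product G Mx A" "A \<in> P"
      using assms(6) finJ Jne JP by (auto simp: Mx_def A_def)
    have subA: "subgroup A G" using hA(2) assms(2) by simp
    have AVs: "\<And>V. V \<in> Mx \<Longrightarrow> A \<subseteq> V" by (auto simp: A_def)
    have subMx: "\<And>V. V \<in> Mx \<Longrightarrow> subgroup V G"
    proof -
      fix V assume "V \<in> Mx"
      then have "V \<in> J" using MxJ by blast
      then show "subgroup V G" by (rule subP)
    qed
    have am: "amalg G Mx A"
      unfolding amalg_def amalg_axioms_def using assms(1) subMx subA AVs by simp
    have Mne: "Mx \<noteq> {}" using V0Mx by blast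
    have yA: "y V0 \<in> H_fun G A" using amalg.core[OF am finMx Mne hA(1) yH ysum] V0Mx by blast
    have AV0: "A \<subset> V0"
    proof -
      have "A \<subseteq> V0" using AVs[OF V0Mx] .
      moreover have "A \<noteq> V0"
      proof
        assume "A = V0"
        then have "V0 \<subseteq> V1" using AVs[OF V1(1)] by simp
        then have "V0 \<subset> V1" using V1(2) by blast
        moreover have "V1 \<in> J" using V1(1) MxJ by blast
        ultimately show False using V0 by (auto simp: max_elems_def)
      qed
      ultimately show ?thesis by blast
    qed
    have AnR: "A \<notin> R \<or> A \<in> R" by simp
    define x' where "x' = (\<lambda>W g. (if W = A then y V0 g else 0) + (if W \<in> R then - x W g else 0))"
    have Acar: "A \<subseteq> carrier G" by (rule subgroup.subset[OF subA])
    have x'H: "\<And>W. W \<in> insert A R \<Longrightarrow> x' W \<in> H_fun G W"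
    proof -
      fix W assume W: "W \<in> insert A R"
      have Wc: "W \<subseteq> carrier G" using W Acar carP by (auto simp: R_def)
      have h1: "(\<lambda>g. if W = A then y V0 g else 0) \<in> H_fun G W"
        using yA H_zero[OF Wc] by (cases "W = A") auto
      have h2: "(\<lambda>g. if W \<in> R then - x W g else 0) \<in> H_fun G W"
        using RH H_zero[OF Wc] by (cases "W \<in> R") auto
      show "x' W \<in> H_fun G W" unfolding x'_def using H_add[OF Wc h1 h2] by simp
    qed
    have x'sum: "x V0 = (\<lambda>g. \<Sum>W\<in>insert A R. x' W g)"
    proof
      fix g
      have fin: "finite (insert A R)" using finR by simp
      have "(\<Sum>W\<in>insert A R. x' W g) = (\<Sum>W\<in>insert A R. if W = A then y V0 g else 0) +
          (\<Sum>W\<in>insert A R. if W \<in> R then - x W g else 0)"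
        unfolding x'_def by (simp add: sum.distrib)
      also have "(\<Sum>W\<in>insert A R. if W = A then y V0 g else 0) = y V0 g"
        using fin by (simp add: sum.delta)
      also have "(\<Sum>W\<in>insert A R. if W \<in> R then - x W g else 0) = (\<Sum>W\<in>R. - x W g)"
      proof -
        have "(\<Sum>W\<in>insert A R. if W \<in> R then - x W g else 0) = (\<Sum>W\<in>(insert A R) \<inter> R. - x W g)"
          using fin by (simp add: sum.inter_restrict)
        also have "(insert A R) \<inter> R = R" by blast
        finally show ?thesis .
      qed
      finally show "x V0 g = (\<Sum>W\<in>insert A R. x' W g)" using xdec by simp
    qed
    show ?thesis unfolding Im_H_def
    proof (intro CollectI exI[of _ "insert A R"] exI[of _ x'] conjI)
      show "finite (insert A R)" using finR by simp
      show "insert A R \<subseteq> {W \<in> P. W \<subset> V0}" using hA(2) AV0 Rsub by auto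
      show "\<forall>W\<in>insert A R. x' W \<in> H_fun G W" using x'H by blast
      show "x V0 = (\<lambda>g. \<Sum>W\<in>insert A R. x' W g)" by (rule x'sum)
    qed
  qed
qed

end
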